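(* For each $n\geq 2$ let $X_n$ be any set of $n$ distinct points in $\mathbb{R}^2$. Then $\lim_{n\to\infty}\rho(X_n)=1$, where $\rho(X)=P_X(M_X)/P_X(s^*_X)$.
   Context: For a finite $X=\{x_j:j\in J\}$, $P_X(s)=\sum_{j\in J}\|s-x_j\|^2+\max_{j\in J}\|s-x_j\|^2$, $s^*_X$ is its unique minimiser (the quadratic min-power centre), and $M_X=\frac{1}{|J|}\sum_jx_j$ is the centroid. *)

theory Defs
  imports "HOL-Analysis.Analysis"
begin

definition P :: "(real^2) set \<Rightarrow> real^2 \<Rightarrow> real" where
  "P X s = (\<Sum>x\<in>X. (norm (s - x))\<^sup>2) + Max ((\<lambda>x. (norm (s - x))\<^sup>2) ` X)"

definition smin :: "(real^2) set \<Rightarrow> real^2" where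
  "smin X = (THE s. \<forall>t. P X s \<le> P X t)"

definition centroid :: "(real^2) set \<Rightarrow> real^2" where
  "centroid X = (1 / real (card X)) *\<^sub>R (\<Sum>x\<in>X. x)"

definition rho :: "(real^2) set \<Rightarrow> real" where
  "rho X = P X (centroid X) / P X (smin X)"

end

theory Submission
  imports Defs
begin

lemma sq_decomp:
  fixes X :: "(real^2) set"
  assumes "finite X" "X \<noteq> {}"
  shows "(\<Sum>x\<in>X. (norm (s - x))\<^sup>2) = real (card X) * (norm (s - centroid X))\<^sup>2 + (\<Sum>x\<in>X. (norm (centroid X - x))\<^sup>2)"
proof -
  let ?M = "centroid X"
  have n: "real (card X) > 0" using assms by (simp add: card_gt_0_iff)
  have "(\<Sum>x\<in>X. (?M - x)) = real (card X) *\<^sub>R ?M - (\<Sum>x\<in>X. x)"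
    by (simp only: sum_subtractf sum_constant_scaleR)
  also have "\<dots> = 0" using n by (simp add: centroid_def)
  finally have z: "(\<Sum>x\<in>X. (?M - x)) = 0" .
  have e: "\<And>x. (norm (s - x))\<^sup>2 = (norm (s - ?M))\<^sup>2 + 2 * inner (s - ?M) (?M - x) + (norm (?M - x))\<^sup>2"
  proof -
    fix x
    have "s - x = (s - ?M) + (?M - x)" by simp
    then have "(norm (s - x))\<^sup>2 = (norm ((s - ?M) + (?M - x)))\<^sup>2" by simp
    also have "\<dots> = (norm (s - ?M))\<^sup>2 + 2 * inner (s - ?M) (?M - x) + (norm (?M - x))\<^sup>2"
      using dot_norm[of "s - ?M" "?M - x"] by simp
    finally show "(norm (s - x))\<^sup>2 = (norm (s - ?M))\<^sup>2 + 2 * inner (s - ?M) (?M - x) + (norm (?M - x))\<^sup>2" .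
  qed
  have "(\<Sum>x\<in>X. inner (s - ?M) (?M - x)) = inner (s - ?M) (\<Sum>x\<in>X. (?M - x))"
    by (simp add: inner_sum_right)
  then have z2: "(\<Sum>x\<in>X. inner (s - ?M) (?M - x)) = 0" using z by simp
  have "(\<Sum>x\<in>X. (norm (s - x))\<^sup>2) = (\<Sum>x\<in>X. (norm (s - ?M))\<^sup>2 + 2 * inner (s - ?M) (?M - x) + (norm (?M - x))\<^sup>2)"
    by (rule sum.cong[OF refl]) (rule e)
  also have "\<dots> = real (card X) * (norm (s - ?M))\<^sup>2 + 2 * (\<Sum>x\<in>X. inner (s - ?M) (?M - x)) + (\<Sum>x\<in>X. (norm (?M - x))\<^sup>2)"
    by (simp only: sum.distrib sum_distrib_left[symmetric] sum_constant)
  finally show ?thesis using z2 by simp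
qed

lemma lin_aux:
  fixes N4 N I A B C :: real
  shows "N4 = N / 4 \<Longrightarrow> I = (N - A - B) / 2 \<Longrightarrow> I = (A + B - C) / 2 \<Longrightarrow> N4 = (A + B) / 2 - C / 4"
  by argo

lemma max_aux:
  fixes a A B C M1 M2 :: real
  shows "A \<le> M1 \<Longrightarrow> B \<le> M2 \<Longrightarrow> 0 \<le> C \<Longrightarrow> a = (A + B) / 2 - C / 4 \<Longrightarrow> a \<le> (M1 + M2) / 2"
  by argo

lemma pu_aux:
  fixes u1 u2 s1 s2 t1 t2 D :: real
  shows "u2 \<le> (s2 + t2) / 2 \<Longrightarrow> u1 = (s1 + t1) / 2 - D / 4 \<Longrightarrow> D > 0 \<Longrightarrow>
     u1 + u2 < ((s1 + s2) + (t1 + t2)) / 2"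
  by argo

lemma fin_aux:
  fixes u a b :: real
  shows "u < (a + b) / 2 \<Longrightarrow> a \<le> b \<Longrightarrow> b \<le> a \<Longrightarrow> a \<le> u \<Longrightarrow> False"
  by (simp add: field_simps)

lemma cont_Max:
  fixes f :: "'a \<Rightarrow> 'b::topological_space \<Rightarrow> real"
  assumes "finite X" "X \<noteq> {}" "\<And>x. continuous_on S (f x)"
  shows "continuous_on S (\<lambda>s. Max ((\<lambda>x. f x s) ` X))"
  using assms(1,2)
proof (induction X rule: finite_ne_induct)
  case (singleton x)
  then show ?case using assms(3) by simp
next
  case (insert x F)
  have "(\<lambda>s. Max ((\<lambda>x. f x s) ` insert x F)) = (\<lambda>s. max (f x s) (Max ((\<lambda>x. f x s) ` F)))"
    using insert by (simp)
  then show ?case using insert assms(3) by (simp add: continuous_on_max)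
qed

lemma P_cont:
  assumes "finite X" "X \<noteq> {}"
  shows "continuous_on UNIV (P X)"
proof -
  have "continuous_on UNIV (\<lambda>s. Max ((\<lambda>x. (norm (s - x))\<^sup>2) ` X))"
    by (rule cont_Max[OF assms, of UNIV "\<lambda>x s. (norm (s - x))\<^sup>2", simplified])
       (intro continuous_intros)
  then show ?thesis unfolding P_def[abs_def]
    by (auto intro!: continuous_intros)
qed

lemma P_lower:
  fixes X :: "(real^2) set"
  assumes "finite X" "X \<noteq> {}"
  shows "P X s \<ge> (\<Sum>x\<in>X. (norm (centroid X - x))\<^sup>2)
     + real (card X) / (real (card X) + 1) * Max ((\<lambda>x. (norm (centroid X - x))\<^sup>2) ` X)"
proof -
  let ?M = "centroid X" and ?n = "real (card X)"
  have n: "?n > 0" using assms by (simp add: card_gt_0_iff)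
  have "Max ((\<lambda>x. (norm (?M - x))\<^sup>2) ` X) \<in> (\<lambda>x. (norm (?M - x))\<^sup>2) ` X"
    by (rule Max_in) (use assms in auto)
  then obtain x0 where x0: "x0 \<in> X" "Max ((\<lambda>x. (norm (?M - x))\<^sup>2) ` X) = (norm (?M - x0))\<^sup>2"
    by auto
  define a where "a = norm (?M - x0)"
  define d where "d = norm (s - ?M)"
  define e where "e = norm (s - x0)"
  have ea: "e \<ge> a - d" unfolding a_def d_def e_def
    using norm_triangle_ineq[of "?M - s" "s - x0"] by (simp add: norm_minus_commute)
  have e0: "e \<ge> 0" "d \<ge> 0" "a \<ge> 0" unfolding a_def d_def e_def by auto
  have me: "Max ((\<lambda>x. (norm (s - x))\<^sup>2) ` X) \<ge> e\<^sup>2"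
    unfolding e_def using x0 assms by (auto intro: Max_ge)
  have key: "?n * d\<^sup>2 + e\<^sup>2 \<ge> ?n / (?n + 1) * a\<^sup>2"
  proof (cases "a - d \<le> 0")
    case True
    then have "a\<^sup>2 \<le> d\<^sup>2" using e0 by (simp add: power_mono)
    then have "?n * a\<^sup>2 \<le> ?n * d\<^sup>2" using n by simp
    moreover have "?n / (?n + 1) * a\<^sup>2 \<le> ?n * a\<^sup>2"
      using n by (simp add: field_simps)
    ultimately show ?thesis by (smt (verit) zero_le_power2)
  next
    case False
    then have "e\<^sup>2 \<ge> (a - d)\<^sup>2" using ea by (simp add: power_mono)
    moreover have "?n * d\<^sup>2 + (a - d)\<^sup>2 \<ge> ?n / (?n + 1) * a\<^sup>2"
    proof -
      have "((?n + 1) * d - a)\<^sup>2 \<ge> 0" by simp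
      then have "(?n + 1) * (?n * d\<^sup>2 + (a - d)\<^sup>2) \<ge> ?n * a\<^sup>2"
        by (simp add: power2_eq_square algebra_simps)
      then show ?thesis using n by (simp add: field_simps)
    qed
    ultimately show ?thesis by linarith
  qed
  show ?thesis
    unfolding P_def sq_decomp[OF assms, of s] x0(2)
    using key me unfolding a_def d_def by linarith
qed

lemma P_centroid:
  fixes X :: "(real^2) set"
  shows "P X (centroid X) = (\<Sum>x\<in>X. (norm (centroid X - x))\<^sup>2) + Max ((\<lambda>x. (norm (centroid X - x))\<^sup>2) ` X)"
  unfolding P_def by simp

lemma smin_min:
  fixes X :: "(real^2) set"
  assumes "finite X" "X \<noteq> {}"
  shows "P X (smin X) \<le> P X t"
proof -
  let ?M = "centroid X" and ?n = "real (card X)"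
  have n: "?n \<ge> 1" using assms by (simp add: Suc_leI card_gt_0_iff)
  have S0: "(\<Sum>x\<in>X. (norm (?M - x))\<^sup>2) \<ge> 0" by (simp add: sum_nonneg)
  have Mx: "\<And>s. Max ((\<lambda>x. (norm (s - x))\<^sup>2) ` X) \<ge> 0"
    using assms by (meson Max_ge ex_in_conv finite_imageI imageI order_trans zero_le_power2)
  have PM0: "P X ?M \<ge> 0" unfolding P_def using S0 Mx[of ?M] by linarith
  define R where "R = sqrt (P X ?M)"
  obtain s0 where s0: "s0 \<in> cball ?M R" "\<forall>y\<in>cball ?M R. P X s0 \<le> P X y"
    using continuous_attains_inf[of "cball ?M R" "P X"] P_cont[OF assms]
    by (metis R_def centre_in_cball continuous_on_subset empty_iff real_sqrt_ge_zero PM0 subset_UNIV compact_cball)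
  have allmin: "\<forall>y. P X s0 \<le> P X y"
  proof
    fix y
    show "P X s0 \<le> P X y"
    proof (cases "y \<in> cball ?M R")
      case True then show ?thesis using s0 by auto
    next
      case False
      then have "dist ?M y > R" by simp
      then have "norm (y - ?M) > R" by (simp add: dist_norm norm_minus_commute)
      moreover have "R \<ge> 0" unfolding R_def using PM0 by simp
      ultimately have "(norm (y - ?M))\<^sup>2 > R\<^sup>2"
        by (simp add: power_strict_mono)
      then have "(norm (y - ?M))\<^sup>2 > P X ?M" unfolding R_def using PM0 by simp
      moreover have "P X y \<ge> ?n * (norm (y - ?M))\<^sup>2"
        unfolding P_def sq_decomp[OF assms, of y] using S0 Mx[of y] by linarith
      moreover have "?n * (norm (y - ?M))\<^sup>2 \<ge> (norm (y - ?M))\<^sup>2" using n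
        by (simp add: mult_le_cancel_right1)
      moreover have "P X s0 \<le> P X ?M" using s0 R_def PM0 by simp
      ultimately show ?thesis by linarith
    qed
  qed
  have uniq: "s = s0" if hs: "\<forall>y. P X s \<le> P X y" for s
  proof (rule ccontr)
    assume ne: "s \<noteq> s0"
    define u where "u = (1/2) *\<^sub>R (s + s0)"
    have mid: "\<And>x. (norm (u - x))\<^sup>2 = ((norm (s - x))\<^sup>2 + (norm (s0 - x))\<^sup>2) / 2 - (norm (s - s0))\<^sup>2 / 4"
    proof -
      fix x
      have e1: "(s - x) + (s0 - x) = (s + s0) - (x + x)" by (simp add: algebra_simps)
      have e2: "(1/2) *\<^sub>R (x + x) = x"
        by (simp only: scaleR_add_right scaleR_add_left[symmetric]) simp
      have "u - x = (1/2) *\<^sub>R ((s - x) + (s0 - x))"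
        unfolding u_def e1 scaleR_diff_right e2 ..
      then have h1: "(norm (u - x))\<^sup>2 = (norm ((s - x) + (s0 - x)))\<^sup>2 / 4"
        by (simp add: power_mult_distrib power2_eq_square)
      have h2: "(s - x) - (s0 - x) = s - s0" by simp
      have h3: "inner (s - x) (s0 - x) = ((norm ((s - x) + (s0 - x)))\<^sup>2 - (norm (s - x))\<^sup>2 - (norm (s0 - x))\<^sup>2) / 2"
        by (rule dot_norm)
      have h4: "inner (s - x) (s0 - x) = (((norm (s - x))\<^sup>2 + (norm (s0 - x))\<^sup>2) - (norm (s - s0))\<^sup>2) / 2"
        using dot_norm_neg[of "s - x" "s0 - x"] unfolding h2 .
      show "(norm (u - x))\<^sup>2 = ((norm (s - x))\<^sup>2 + (norm (s0 - x))\<^sup>2) / 2 - (norm (s - s0))\<^sup>2 / 4"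
        by (rule lin_aux[OF h1 h3 h4])
    qed
    have mx: "Max ((\<lambda>x. (norm (u - x))\<^sup>2) ` X) \<le>
       (Max ((\<lambda>x. (norm (s - x))\<^sup>2) ` X) + Max ((\<lambda>x. (norm (s0 - x))\<^sup>2) ` X)) / 2"
    proof (subst Max_le_iff)
      show "finite ((\<lambda>x. (norm (u - x))\<^sup>2) ` X)" using assms by simp
      show "(\<lambda>x. (norm (u - x))\<^sup>2) ` X \<noteq> {}" using assms by simp
      show "\<forall>a\<in>(\<lambda>x. (norm (u - x))\<^sup>2) ` X. a \<le> (Max ((\<lambda>x. (norm (s - x))\<^sup>2) ` X) + Max ((\<lambda>x. (norm (s0 - x))\<^sup>2) ` X)) / 2"
      proof
        fix a assume "a \<in> (\<lambda>x. (norm (u - x))\<^sup>2) ` X"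
        then obtain x where x: "x \<in> X" "a = (norm (u - x))\<^sup>2" by auto
        have "(norm (s - x))\<^sup>2 \<le> Max ((\<lambda>x. (norm (s - x))\<^sup>2) ` X)" using x assms by (auto intro: Max_ge)
        moreover have "(norm (s0 - x))\<^sup>2 \<le> Max ((\<lambda>x. (norm (s0 - x))\<^sup>2) ` X)" using x assms by (auto intro: Max_ge)
        moreover have "(norm (s - s0))\<^sup>2 \<ge> 0" by simp
        ultimately show "a \<le> (Max ((\<lambda>x. (norm (s - x))\<^sup>2) ` X) + Max ((\<lambda>x. (norm (s0 - x))\<^sup>2) ` X)) / 2"
          using x mid[of x] max_aux by metis
      qed
    qed
    have sm: "(\<Sum>x\<in>X. (norm (u - x))\<^sup>2) = ((\<Sum>x\<in>X. (norm (s - x))\<^sup>2) + (\<Sum>x\<in>X. (norm (s0 - x))\<^sup>2)) / 2 - ?n * (norm (s - s0))\<^sup>2 / 4"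
      by (simp add: mid sum_subtractf sum.distrib sum_divide_distrib[symmetric])
    have pos: "(norm (s - s0))\<^sup>2 > 0" using ne by simp
    have D: "?n * (norm (s - s0))\<^sup>2 > 0" using pos n by simp
    have "P X u < (P X s + P X s0) / 2"
      unfolding P_def by (rule pu_aux[OF mx sm D])
    moreover have "P X s \<le> P X s0" "P X s0 \<le> P X s" "P X s \<le> P X u" using hs allmin by auto
    ultimately show False by (rule fin_aux)
  qed
  have "\<forall>y. P X (smin X) \<le> P X y"
    unfolding smin_def
    by (rule theI[of "\<lambda>s. \<forall>y. P X s \<le> P X y" s0, OF allmin uniq])
  then show ?thesis by simp
qed

lemma rho_bounds:
  fixes X :: "(real^2) set"
  assumes "finite X" "card X \<ge> 2"
  shows "1 \<le> rho X \<and> rho X \<le> 1 + 1 / real (card X)"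
proof -
  have ne: "X \<noteq> {}" using assms by auto
  let ?M = "centroid X" and ?n = "real (card X)"
  let ?S = "(\<Sum>x\<in>X. (norm (?M - x))\<^sup>2)" and ?A = "Max ((\<lambda>x. (norm (?M - x))\<^sup>2) ` X)"
  have n: "?n \<ge> 2" using assms by simp
  have S0: "?S \<ge> 0" by (simp add: sum_nonneg)
  obtain x y where xy: "x \<in> X" "y \<in> X" "x \<noteq> y"
    using assms by (metis card_le_Suc0_iff_eq not_less_eq_eq numeral_2_eq_2)
  have "?M \<noteq> x \<or> ?M \<noteq> y" using xy by auto
  then obtain z where z: "z \<in> X" "?M \<noteq> z" using xy by auto
  have "(norm (?M - z))\<^sup>2 > 0" using z by simp
  moreover have "(norm (?M - z))\<^sup>2 \<le> ?A" using z assms by (auto intro: Max_ge)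
  ultimately have A: "?A > 0" by linarith
  have lo: "P X (smin X) \<ge> ?S + ?n / (?n + 1) * ?A" by (rule P_lower[OF assms(1) ne])
  have c: "?n / (?n + 1) * ?A > 0" using A n by simp
  have Ppos: "P X (smin X) > 0" using lo c S0 by linarith
  have PM: "P X ?M = ?S + ?A" by (rule P_centroid)
  have le: "P X (smin X) \<le> P X ?M" by (rule smin_min[OF assms(1) ne])
  have r1: "1 \<le> rho X" unfolding rho_def using le Ppos by simp
  have "P X ?M \<le> (1 + 1 / ?n) * (?S + ?n / (?n + 1) * ?A)"
  proof -
    have "?n > 0" "?n + 1 > 0" using n by auto
    moreover have "?n + ?n * ?n > 0" using \<open>?n > 0\<close> by (simp add: add_pos_pos)
    ultimately have h: "(1 + 1/?n) * (?n/(?n+1)) = 1" by (simp add: field_simps)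
    have "(1 + 1 / ?n) * (?S + ?n / (?n + 1) * ?A) = (1 + 1/?n) * ?S + ((1 + 1/?n) * (?n/(?n+1))) * ?A"
      by (simp only: distrib_left mult.assoc)
    then have "(1 + 1 / ?n) * (?S + ?n / (?n + 1) * ?A) = (1 + 1/?n) * ?S + ?A"
      by (simp only: h mult_1_left)
    moreover have "(1 + 1/?n) * ?S \<ge> ?S" using S0 n by (simp add: algebra_simps)
    ultimately show ?thesis using PM by linarith
  qed
  also have "\<dots> \<le> (1 + 1 / ?n) * P X (smin X)"
    using lo n by (intro mult_left_mono) auto
  finally have "rho X \<le> 1 + 1 / ?n" unfolding rho_def using Ppos by (simp add: divide_le_eq)
  with r1 show ?thesis by simp
qed

theorem corollary3:
  fixes Xs :: "nat \<Rightarrow> (real^2) set"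
  assumes "\<And>n. n \<ge> 2 \<Longrightarrow> finite (Xs n) \<and> card (Xs n) = n"
  shows "(\<lambda>n. rho (Xs n)) \<longlonglongrightarrow> 1"
proof (rule real_tendsto_sandwich[where f = "\<lambda>_. 1" and h = "\<lambda>n. 1 + 1 / real n"])
  show "\<forall>\<^sub>F n in sequentially. 1 \<le> rho (Xs n)"
    using eventually_ge_at_top[of 2] by eventually_elim (use assms rho_bounds in auto)
  show "\<forall>\<^sub>F n in sequentially. rho (Xs n) \<le> 1 + 1 / real n"
    using eventually_ge_at_top[of 2] by eventually_elim (use assms rho_bounds in fastforce)
  show "(\<lambda>_. 1::real) \<longlonglongrightarrow> 1" by simp
  show "(\<lambda>n. 1 + 1 / real n) \<longlonglongrightarrow> 1"
    using tendsto_add[OF tendsto_const[of "1::real"] lim_const_over_n[of 1]] by simp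
qed

end
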